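(* Let $r\ge0$ be an integer and let $B(x,y)$ be a $q$-quasi-polynomial in $x$ and $y$ of degree $d$, i.e. a linear combination of terms $[x;q]_m[y;q]_n\rho_1^x\rho_2^y$ with $m+n\le d$ and $\rho_1,\rho_2$ roots of unity. Then $D(r,B)(x,y)$ is a $q$-quasi-polynomial of degree at most $2r+d$ in $x$ and $y$ (i.e. a linear combination of such terms with $m+n\le 2r+d$).
   Context: $q$ is an indeterminate; $[x;q]=(1-q^x)/(1-q)$, $[x;q]_m=\prod_{i=0}^{m-1}[x+i;q]$; coefficients of the linear combinations may be rational functions of $q$. Sums use the convention: $\sum_{i=a}^bf(i)=f(a)+\cdots+f(b)$ if $a\le b$, $0$ if $b=a-1$, and $-f(b+1)-\cdots-f(a-1)$ if $b+1\le a-1$. $D(0,B)=B$ and $D(r,B)(x,y)=\sum_{x'=x+1}^{y+1}\sum_{y'=x}^{y}D(r-1,B)(x',y')\,q^{x'+y'}$. *)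

theory Defs
  imports Complex_Main "HOL-Computational_Algebra.Polynomial" "HOL-Computational_Algebra.Fraction_Field"
begin

type_synonym qrat = "complex poly fract"

definition qvar :: qrat where "qvar = Fract [:0, 1:] 1"

definition cconst :: "complex \<Rightarrow> qrat" where "cconst c = Fract [:c:] 1"

definition qnum :: "int \<Rightarrow> qrat" where
  "qnum x = (1 - qvar powi x) / (1 - qvar)"

definition qpoch :: "int \<Rightarrow> nat \<Rightarrow> qrat" where
  "qpoch x m = (\<Prod>i<m. qnum (x + int i))"

definition gsum :: "(int \<Rightarrow> qrat) \<Rightarrow> int \<Rightarrow> int \<Rightarrow> qrat" where
  "gsum f a b = (if a \<le> b then (\<Sum>i\<in>{a..b}. f i) else - (\<Sum>i\<in>{b+1..a-1}. f i))"

definition root_of_unity :: "complex \<Rightarrow> bool" where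
  "root_of_unity \<rho> \<longleftrightarrow> (\<exists>k::nat. k > 0 \<and> \<rho> ^ k = 1)"

definition qquasi_poly :: "nat \<Rightarrow> (int \<Rightarrow> int \<Rightarrow> qrat) \<Rightarrow> bool" where
  "qquasi_poly d B \<longleftrightarrow>
     (\<exists>ts :: (qrat \<times> nat \<times> nat \<times> complex \<times> complex) list.
        (\<forall>(c, m, n, \<rho>1, \<rho>2) \<in> set ts. m + n \<le> d \<and> root_of_unity \<rho>1 \<and> root_of_unity \<rho>2) \<and>
        (\<forall>x y. B x y = (\<Sum>(c, m, n, \<rho>1, \<rho>2) \<leftarrow> ts.
             c * qpoch x m * qpoch y n * cconst \<rho>1 powi x * cconst \<rho>2 powi y)))"

fun D :: "nat \<Rightarrow> (int \<Rightarrow> int \<Rightarrow> qrat) \<Rightarrow> int \<Rightarrow> int \<Rightarrow> qrat" where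
  "D 0 B = B"
| "D (Suc r) B = (\<lambda>x y. gsum (\<lambda>x'. gsum (\<lambda>y'. D r B x' y' * qvar powi (x' + y')) x y) (x + 1) (y + 1))"

end

theory Submission
  imports Defs
begin


lemma Fract_pow1: "(Fract (a::'a::idom) 1) ^ k = Fract (a ^ k) 1"
  by (induction k) (simp_all add: One_fract_def)

lemma Fract_eq1: "Fract (a::'a::idom) 1 = Fract b 1 \<longleftrightarrow> a = b"
  by (simp add: eq_fract)

lemma qvar_nz: "qvar \<noteq> 0"
  unfolding qvar_def Zero_fract_def Fract_eq1 by simp

lemma qvar_ne1: "qvar \<noteq> 1"
  unfolding qvar_def One_fract_def Fract_eq1 by (simp add: one_pCons)

lemma one_minus_qvar_nz: "1 - qvar \<noteq> 0"
  using qvar_ne1 by simp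

lemma cconst_mult: "cconst (a * b) = cconst a * cconst b"
  by (simp add: cconst_def mult.commute)

lemma cconst_1: "cconst 1 = 1"
  by (simp add: cconst_def One_fract_def one_pCons)

lemma cconst_nz: "c \<noteq> 0 \<Longrightarrow> cconst c \<noteq> 0"
  by (simp add: cconst_def Zero_fract_def Fract_eq1)

lemma root_nz: "root_of_unity r \<Longrightarrow> r \<noteq> 0"
  unfolding root_of_unity_def by (auto simp: power_0_left)

lemma root_mult: "root_of_unity a \<Longrightarrow> root_of_unity b \<Longrightarrow> root_of_unity (a * b)"
  unfolding root_of_unity_def
proof (elim exE conjE)
  fix k l :: nat assume "k > 0" "a ^ k = 1" "l > 0" "b ^ l = 1"
  then show "\<exists>k>0. (a * b) ^ k = 1"
  proof (intro exI[of _ "k * l"] conjI)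
    show "0 < k * l" using \<open>k>0\<close> \<open>l>0\<close> by simp
    have "(a * b) ^ (k * l) = (a ^ k) ^ l * (b ^ l) ^ k"
      by (simp add: power_mult_distrib power_mult[symmetric] mult.commute)
    then show "(a * b) ^ (k * l) = 1" using \<open>a ^ k = 1\<close> \<open>b ^ l = 1\<close> by simp
  qed
qed

lemma root_1: "root_of_unity 1"
  unfolding root_of_unity_def by auto

lemma w_ne1: "k > 0 \<Longrightarrow> qvar ^ k * cconst r \<noteq> 1"
proof
  assume "k > 0" "qvar ^ k * cconst r = 1"
  then have "[:0, 1:] ^ k * [:r:] = (1 :: complex poly)"
    unfolding qvar_def cconst_def Fract_pow1 mult_fract One_fract_def by (simp add: eq_fract)
  then have "poly ([:0, 1:] ^ k * [:r:]) 0 = (1::complex)" by simp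
  with \<open>k > 0\<close> show False by (simp add: power_0_left)
qed

lemma w_nz: "r \<noteq> 0 \<Longrightarrow> qvar ^ k * cconst r \<noteq> 0"
  using qvar_nz cconst_nz by simp



inductive expo :: "nat \<Rightarrow> (int \<Rightarrow> int \<Rightarrow> qrat) \<Rightarrow> bool" where
  ezero: "expo d (\<lambda>x y. 0)"
| eatom: "a + b \<le> d \<Longrightarrow> root_of_unity r1 \<Longrightarrow> root_of_unity r2 \<Longrightarrow>
    expo d (\<lambda>x y. c * (qvar ^ a * cconst r1) powi x * (qvar ^ b * cconst r2) powi y)"
| eadd: "expo d f \<Longrightarrow> expo d g \<Longrightarrow> expo d (\<lambda>x y. f x y + g x y)"

lemma expo_eq: "expo d f \<Longrightarrow> (\<And>x y. g x y = f x y) \<Longrightarrow> expo d g"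
proof -
  assume "expo d f" "\<And>x y. g x y = f x y"
  then have "g = f" by (intro ext) auto
  with \<open>expo d f\<close> show ?thesis by simp
qed

lemma expo_atom': "a + b \<le> d \<Longrightarrow> root_of_unity ra \<Longrightarrow> root_of_unity rb \<Longrightarrow>
  (\<And>x y. f x y = c * (qvar ^ a * cconst ra) powi x * (qvar ^ b * cconst rb) powi y) \<Longrightarrow> expo d f"
  by (rule expo_eq[OF eatom])

lemma expo_smult: "expo d f \<Longrightarrow> expo d (\<lambda>x y. k * f x y)"
proof (induction rule: expo.induct)
  case (ezero d) then show ?case by (simp add: expo.ezero)
next
  case (eatom a b d r1 r2 c)
  then show ?case by (rule expo_atom'[where a=a and b=b and ra=r1 and rb=r2 and c = "k * c"]) (auto simp: mult.assoc)
next
  case (eadd d f g)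
  then show ?case by (intro expo_eq[OF expo.eadd[OF eadd.IH]]) (simp add: distrib_left)
qed

lemma expo_mono: "expo d f \<Longrightarrow> d \<le> d' \<Longrightarrow> expo d' f"
proof (induction rule: expo.induct)
  case (ezero d) then show ?case by (simp add: expo.ezero)
next
  case (eatom a b d r1 r2 c)
  then show ?case by (intro expo.eatom) auto
next
  case (eadd d f g)
  then show ?case by (intro expo.eadd) auto
qed

lemma expo_mulX: "expo d f \<Longrightarrow> expo (Suc d) (\<lambda>x y. qvar powi x * f x y)"
proof (induction rule: expo.induct)
  case (ezero d) then show ?case by (simp add: expo.ezero)
next
  case (eatom a b d r1 r2 c)
  show ?case
    apply (rule expo_atom'[where a="Suc a" and b=b and ra=r1 and rb=r2 and c = c])
    using eatom by (auto simp: power_int_mult_distrib)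
next
  case (eadd d f g)
  then show ?case by (intro expo_eq[OF expo.eadd[OF eadd.IH]]) (simp add: distrib_left)
qed

lemma expo_mulY: "expo d f \<Longrightarrow> expo (Suc d) (\<lambda>x y. qvar powi y * f x y)"
proof (induction rule: expo.induct)
  case (ezero d) then show ?case by (simp add: expo.ezero)
next
  case (eatom a b d r1 r2 c)
  show ?case
    apply (rule expo_atom'[where a=a and b="Suc b" and ra=r1 and rb=r2 and c = c])
    using eatom by (auto simp: power_int_mult_distrib)
next
  case (eadd d f g)
  then show ?case by (intro expo_eq[OF expo.eadd[OF eadd.IH]]) (simp add: distrib_left)
qed

lemma qnum_shift: "qnum (x + int i) = 1 / (1 - qvar) + (- (qvar ^ i / (1 - qvar))) * qvar powi x"
  using qvar_nz one_minus_qvar_nz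
  by (simp add: qnum_def power_int_add diff_divide_distrib mult.commute)

lemma expo_qnumX: "expo d f \<Longrightarrow> expo (Suc d) (\<lambda>x y. qnum (x + int i) * f x y)"
proof -
  assume f: "expo d f"
  have "expo (Suc d) (\<lambda>x y. 1 / (1 - qvar) * f x y + (- (qvar ^ i / (1 - qvar))) * (qvar powi x * f x y))"
    by (intro expo.eadd expo_smult expo_mulX f expo_mono[OF f]) auto
  then show ?thesis
    by (rule expo_eq) (simp add: qnum_shift algebra_simps)
qed

lemma expo_qnumY: "expo d f \<Longrightarrow> expo (Suc d) (\<lambda>x y. qnum (y + int i) * f x y)"
proof -
  assume f: "expo d f"
  have "expo (Suc d) (\<lambda>x y. 1 / (1 - qvar) * f x y + (- (qvar ^ i / (1 - qvar))) * (qvar powi y * f x y))"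
    by (intro expo.eadd expo_smult expo_mulY f expo_mono[OF f]) auto
  then show ?thesis
    by (rule expo_eq) (simp add: qnum_shift algebra_simps)
qed

lemma qpoch_Suc: "qpoch x (Suc m) = qnum (x + int m) * qpoch x m"
  by (simp add: qpoch_def lessThan_Suc mult.commute)

lemma expo_qterm0:
  assumes "root_of_unity r1" "root_of_unity r2"
  shows "expo n (\<lambda>x y. c * qpoch y n * cconst r1 powi x * cconst r2 powi y)"
proof (induction n)
  case 0
  show ?case by (rule expo_atom'[where a = 0 and b = 0 and c = c, OF _ assms]) (simp_all add: qpoch_def)
next
  case (Suc n)
  show ?case
    by (rule expo_eq[OF expo_qnumY[OF Suc, of n]]) (simp add: qpoch_Suc mult_ac)
qed

lemma expo_qterm:
  assumes "root_of_unity r1" "root_of_unity r2"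
  shows "expo (m + n) (\<lambda>x y. c * qpoch x m * qpoch y n * cconst r1 powi x * cconst r2 powi y)"
proof (induction m)
  case 0
  show ?case using expo_qterm0[OF assms, of n c] by (simp add: qpoch_def)
next
  case (Suc m)
  show ?case
    using expo_qnumX[OF Suc, of m] by (simp add: qpoch_Suc mult_ac)
qed

lemma qquasi_expo_list:
  "(\<forall>(c, m, n, \<rho>1, \<rho>2) \<in> set ts. m + n \<le> d \<and> root_of_unity \<rho>1 \<and> root_of_unity \<rho>2) \<Longrightarrow>
   expo d (\<lambda>x y. (\<Sum>(c, m, n, \<rho>1, \<rho>2) \<leftarrow> ts.
             c * qpoch x m * qpoch y n * cconst \<rho>1 powi x * cconst \<rho>2 powi y))"
proof (induction ts)
  case Nil then show ?case by (simp add: expo.ezero)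
next
  case (Cons t ts)
  obtain c m n r1 r2 where t: "t = (c, m, n, r1, r2)" by (cases t) auto
  from Cons.prems t have h: "m + n \<le> d" "root_of_unity r1" "root_of_unity r2" by auto
  show ?case using Cons
    by (simp add: t) (intro expo.eadd expo_mono[OF expo_qterm[OF h(2,3)] h(1)]; simp)
qed

lemma qquasi_expo: "qquasi_poly d B \<Longrightarrow> expo d B"
  unfolding qquasi_poly_def
  by (elim exE conjE, rule expo_eq[OF qquasi_expo_list]) auto



inductive qq :: "nat \<Rightarrow> (int \<Rightarrow> int \<Rightarrow> qrat) \<Rightarrow> bool" where
  qzero: "qq d (\<lambda>x y. 0)"
| qatom: "m + n \<le> d \<Longrightarrow> root_of_unity r1 \<Longrightarrow> root_of_unity r2 \<Longrightarrow>
    qq d (\<lambda>x y. c * qpoch x m * qpoch y n * cconst r1 powi x * cconst r2 powi y)"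
| qadd: "qq d f \<Longrightarrow> qq d g \<Longrightarrow> qq d (\<lambda>x y. f x y + g x y)"

lemma qq_eq: "qq d f \<Longrightarrow> (\<And>x y. g x y = f x y) \<Longrightarrow> qq d g"
proof -
  assume "qq d f" "\<And>x y. g x y = f x y"
  then have "g = f" by (intro ext) auto
  with \<open>qq d f\<close> show ?thesis by simp
qed

lemma qq_atom': "m + n \<le> d \<Longrightarrow> root_of_unity ra \<Longrightarrow> root_of_unity rb \<Longrightarrow>
  (\<And>x y. f x y = c * qpoch x m * qpoch y n * cconst ra powi x * cconst rb powi y) \<Longrightarrow> qq d f"
  by (rule qq_eq[OF qatom])

lemma qq_qquasi: "qq d f \<Longrightarrow> qquasi_poly d f"
proof (induction rule: qq.induct)
  case (qzero d)
  show ?case unfolding qquasi_poly_def by (intro exI[of _ "[]"]) simp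
next
  case (qatom m n d r1 r2 c)
  then show ?case unfolding qquasi_poly_def by (intro exI[of _ "[(c, m, n, r1, r2)]"]) simp
next
  case (qadd d f g)
  from qadd.IH obtain ts1 ts2 where
    "(\<forall>(c, m, n, \<rho>1, \<rho>2) \<in> set ts1. m + n \<le> d \<and> root_of_unity \<rho>1 \<and> root_of_unity \<rho>2)"
    "(\<forall>x y. f x y = (\<Sum>(c, m, n, \<rho>1, \<rho>2) \<leftarrow> ts1.
             c * qpoch x m * qpoch y n * cconst \<rho>1 powi x * cconst \<rho>2 powi y))"
    "(\<forall>(c, m, n, \<rho>1, \<rho>2) \<in> set ts2. m + n \<le> d \<and> root_of_unity \<rho>1 \<and> root_of_unity \<rho>2)"
    "(\<forall>x y. g x y = (\<Sum>(c, m, n, \<rho>1, \<rho>2) \<leftarrow> ts2.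
             c * qpoch x m * qpoch y n * cconst \<rho>1 powi x * cconst \<rho>2 powi y))"
    unfolding qquasi_poly_def by blast
  then show ?case unfolding qquasi_poly_def by (intro exI[of _ "ts1 @ ts2"]) auto
qed

lemma qq_smult: "qq d f \<Longrightarrow> qq d (\<lambda>x y. k * f x y)"
proof (induction rule: qq.induct)
  case (qzero d) then show ?case by (simp add: qq.qzero)
next
  case (qatom m n d r1 r2 c)
  show ?case
    apply (rule qq_atom'[where m=m and n=n and ra=r1 and rb=r2 and c = "k * c"])
    using qatom by (auto simp: mult.assoc)
next
  case (qadd d f g)
  then show ?case by (intro qq_eq[OF qq.qadd[OF qadd.IH]]) (simp add: distrib_left)
qed

lemma qq_mono: "qq d f \<Longrightarrow> d \<le> d' \<Longrightarrow> qq d' f"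
proof (induction rule: qq.induct)
  case (qzero d) then show ?case by (simp add: qq.qzero)
next
  case (qatom m n d r1 r2 c)
  then show ?case by (intro qq.qatom) auto
next
  case (qadd d f g)
  then show ?case by (intro qq.qadd) auto
qed

lemma X_qpoch: "qvar powi x * qpoch x m = (qpoch x m - (1 - qvar) * qpoch x (Suc m)) / qvar ^ m"
proof -
  have h: "qnum (x + int m) * (1 - qvar) = 1 - qvar ^ m * qvar powi x"
    using one_minus_qvar_nz qvar_nz by (simp add: qnum_def power_int_add mult.commute)
  have "qpoch x (Suc m) * (1 - qvar) = qpoch x m * (qnum (x + int m) * (1 - qvar))"
    by (simp add: qpoch_Suc mult_ac)
  also have "\<dots> = qpoch x m * (1 - qvar ^ m * qvar powi x)" by (simp only: h)
  finally have h2: "qpoch x (Suc m) * (1 - qvar) = qpoch x m * (1 - qvar ^ m * qvar powi x)" .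
  have "qpoch x m - (1 - qvar) * qpoch x (Suc m) = qvar ^ m * (qvar powi x * qpoch x m)"
    using h2 by (simp add: algebra_simps)
  then show ?thesis using qvar_nz by simp
qed

lemma fld_aux: "(b::'a::field) \<noteq> 0 \<Longrightarrow> ((P - a*P')/b)*R = (1/b)*(P*R) + (-(a/b))*(P'*R)"
  by (simp add: field_simps)

lemma qq_mulX: "qq d f \<Longrightarrow> qq (Suc d) (\<lambda>x y. qvar powi x * f x y)"
proof (induction rule: qq.induct)
  case (qzero d) then show ?case by (simp add: qq.qzero)
next
  case (qatom m n d r1 r2 c)
  have "qq (Suc d) (\<lambda>x y. (1 / qvar ^ m) * (c * qpoch x m * qpoch y n * cconst r1 powi x * cconst r2 powi y)
      + (- ((1 - qvar) / qvar ^ m)) * (c * qpoch x (Suc m) * qpoch y n * cconst r1 powi x * cconst r2 powi y))"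
    using qatom by (intro qq.qadd qq_smult qq.qatom) auto
  then show ?case
  proof (rule qq_eq)
    fix x y
    have "qvar powi x * (c * qpoch x m * qpoch y n * cconst r1 powi x * cconst r2 powi y)
      = (qvar powi x * qpoch x m) * (c * qpoch y n * cconst r1 powi x * cconst r2 powi y)"
      by (simp only: mult_ac)
    also have "\<dots> = ((qpoch x m - (1 - qvar) * qpoch x (Suc m)) / qvar ^ m) * (c * qpoch y n * cconst r1 powi x * cconst r2 powi y)"
      by (simp only: X_qpoch)
    also have "\<dots> = (1 / qvar ^ m) * (qpoch x m * (c * qpoch y n * cconst r1 powi x * cconst r2 powi y))
       + (- ((1 - qvar) / qvar ^ m)) * (qpoch x (Suc m) * (c * qpoch y n * cconst r1 powi x * cconst r2 powi y))"
      by (rule fld_aux) (simp add: qvar_nz)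
    finally show "qvar powi x * (c * qpoch x m * qpoch y n * cconst r1 powi x * cconst r2 powi y) =
      (1 / qvar ^ m) * (c * qpoch x m * qpoch y n * cconst r1 powi x * cconst r2 powi y)
      + (- ((1 - qvar) / qvar ^ m)) * (c * qpoch x (Suc m) * qpoch y n * cconst r1 powi x * cconst r2 powi y)"
      by (simp only: distrib_right mult_ac)
  qed
next
  case (qadd d f g)
  then show ?case by (intro qq_eq[OF qq.qadd[OF qadd.IH]]) (simp add: distrib_left)
qed



lemma qq_mulY: "qq d f \<Longrightarrow> qq (Suc d) (\<lambda>x y. qvar powi y * f x y)"
proof (induction rule: qq.induct)
  case (qzero d) then show ?case by (simp add: qq.qzero)
next
  case (qatom m n d r1 r2 c)
  have "qq (Suc d) (\<lambda>x y. (1 / qvar ^ n) * (qpoch y n * (c * qpoch x m * cconst r1 powi x * cconst r2 powi y))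
      + (- ((1 - qvar) / qvar ^ n)) * (qpoch y (Suc n) * (c * qpoch x m * cconst r1 powi x * cconst r2 powi y)))"
  proof (intro qq.qadd qq_smult)
    show "qq (Suc d) (\<lambda>x y. qpoch y n * (c * qpoch x m * cconst r1 powi x * cconst r2 powi y))"
      apply (rule qq_atom'[where m=m and n=n and ra=r1 and rb=r2 and c = c])
      using qatom by (auto simp: mult_ac)
    show "qq (Suc d) (\<lambda>x y. qpoch y (Suc n) * (c * qpoch x m * cconst r1 powi x * cconst r2 powi y))"
      apply (rule qq_atom'[where m=m and n="Suc n" and ra=r1 and rb=r2 and c = c])
      using qatom by (auto simp: mult_ac)
  qed
  then show ?case
  proof (rule qq_eq)
    fix x y
    have "qvar powi y * (c * qpoch x m * qpoch y n * cconst r1 powi x * cconst r2 powi y)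
      = (qvar powi y * qpoch y n) * (c * qpoch x m * cconst r1 powi x * cconst r2 powi y)"
      by (simp only: mult_ac)
    also have "\<dots> = ((qpoch y n - (1 - qvar) * qpoch y (Suc n)) / qvar ^ n) * (c * qpoch x m * cconst r1 powi x * cconst r2 powi y)"
      by (simp only: X_qpoch)
    also have "\<dots> = (1 / qvar ^ n) * (qpoch y n * (c * qpoch x m * cconst r1 powi x * cconst r2 powi y))
       + (- ((1 - qvar) / qvar ^ n)) * (qpoch y (Suc n) * (c * qpoch x m * cconst r1 powi x * cconst r2 powi y))"
      by (rule fld_aux) (simp add: qvar_nz)
    finally show "qvar powi y * (c * qpoch x m * qpoch y n * cconst r1 powi x * cconst r2 powi y) =
      (1 / qvar ^ n) * (qpoch y n * (c * qpoch x m * cconst r1 powi x * cconst r2 powi y))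
       + (- ((1 - qvar) / qvar ^ n)) * (qpoch y (Suc n) * (c * qpoch x m * cconst r1 powi x * cconst r2 powi y))" .
  qed
next
  case (qadd d f g)
  then show ?case by (intro qq_eq[OF qq.qadd[OF qadd.IH]]) (simp add: distrib_left)
qed

lemma qq_expatom0:
  assumes "root_of_unity r1" "root_of_unity r2"
  shows "qq b (\<lambda>x y. c * cconst r1 powi x * (qvar ^ b * cconst r2) powi y)"
proof (induction b)
  case 0
  show ?case by (rule qq_atom'[where m = 0 and n = 0 and c = c, OF _ assms]) (simp_all add: qpoch_def)
next
  case (Suc b)
  show ?case
    by (rule qq_eq[OF qq_mulY[OF Suc]]) (simp add: power_int_mult_distrib mult_ac)
qed

lemma qq_expatom:
  assumes "root_of_unity r1" "root_of_unity r2"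
  shows "qq (a + b) (\<lambda>x y. c * (qvar ^ a * cconst r1) powi x * (qvar ^ b * cconst r2) powi y)"
proof (induction a)
  case 0
  show ?case using qq_expatom0[OF assms, of b c] by simp
next
  case (Suc a)
  show ?case
    using qq_mulX[OF Suc] by (simp add: power_int_mult_distrib mult_ac)
qed

lemma expo_qq: "expo d f \<Longrightarrow> qq d f"
proof (induction rule: expo.induct)
  case (ezero d) then show ?case by (rule qq.qzero)
next
  case (eatom a b d r1 r2 c)
  then show ?case using qq_mono[OF qq_expatom] by blast
next
  case (eadd d f g)
  show ?case by (rule qq.qadd[OF eadd.IH])
qed



lemma tele_aux:
  assumes "\<And>i. f i = G (i + 1) - G i"
  shows "(\<Sum>i\<in>{a..a + int k - 1}. f i) = G (a + int k) - (G a :: qrat)"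
proof (induction k)
  case 0 then show ?case by simp
next
  case (Suc k)
  have "{a..a + int (Suc k) - 1} = insert (a + int k) {a..a + int k - 1}" by auto
  then have "(\<Sum>i\<in>{a..a + int (Suc k) - 1}. f i) = f (a + int k) + (\<Sum>i\<in>{a..a + int k - 1}. f i)"
    by simp
  also have "\<dots> = (G (a + int k + 1) - G (a + int k)) + (G (a + int k) - G a)"
    by (simp only: Suc.IH assms[of "a + int k"])
  also have "\<dots> = G (a + int (Suc k)) - G a" by (simp add: ac_simps)
  finally show ?case .
qed

lemma gsum_tele:
  assumes "\<And>i. f i = G (i + 1) - G i"
  shows "gsum f a b = G (b + 1) - G a"
proof (cases "a \<le> b")
  case True
  obtain k where k: "b = a + int k - 1" using True by (intro that[of "nat (b - a + 1)"]) auto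
  show ?thesis using True tele_aux[where f=f and G=G, OF assms, of a k] unfolding gsum_def k by simp
next
  case False
  obtain k where k: "a = (b + 1) + int k" using False by (intro that[of "nat (a - b - 1)"]) auto
  have "(\<Sum>i\<in>{b+1..a-1}. f i) = G a - G (b + 1)"
    using tele_aux[where f=f and G=G, OF assms, of "b + 1" k] unfolding k by simp
  then show ?thesis using False unfolding gsum_def by simp
qed

lemma gsum_add: "gsum (\<lambda>i. f i + g i) a b = gsum f a b + gsum g a b"
  unfolding gsum_def by (simp add: sum.distrib)

lemma gsum_cmult: "gsum (\<lambda>i. c * f i) a b = c * gsum f a b"
  unfolding gsum_def by (simp add: sum_distrib_left)

lemma gsum_zero: "gsum (\<lambda>i. 0) a b = 0"
  unfolding gsum_def by simp

lemma gsum_geom: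
  assumes "w \<noteq> 0" "w \<noteq> 1"
  shows "gsum (\<lambda>i. w powi i) a b = (w powi (b + 1) - w powi a) / (w - 1)"
proof -
  have "gsum (\<lambda>i. w powi i) a b = w powi (b + 1) / (w - 1) - w powi a / (w - 1)"
  proof (rule gsum_tele)
    fix i :: int
    show "w powi i = w powi (i + 1) / (w - 1) - w powi i / (w - 1)"
    proof -
      have "w - 1 \<noteq> 0" using assms by simp
      have "w powi (i + 1) / (w - 1) - w powi i / (w - 1) = (w powi i * (w - 1)) / (w - 1)"
        using assms power_int_add_1'[of w i] by (simp add: diff_divide_distrib[symmetric] algebra_simps)
      also have "\<dots> = w powi i" using \<open>w - 1 \<noteq> 0\<close> by simp
      finally show ?thesis by simp
    qed
  qed
  then show ?thesis by (simp add: diff_divide_distrib)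
qed



lemma fld2: "(c::'a::field) * (P / u) * (R / v) = (c / (u * v)) * (P * R)"
  by simp

lemma expo_step: "expo d F \<Longrightarrow> expo (Suc (Suc d))
   (\<lambda>x y. gsum (\<lambda>x'. gsum (\<lambda>y'. F x' y' * qvar powi (x' + y')) x y) (x + 1) (y + 1))"
proof (induction rule: expo.induct)
  case (ezero d)
  show ?case by (rule expo_eq[OF expo.ezero]) (simp add: gsum_zero)
next
  case (eadd d f g)
  show ?case by (rule expo_eq[OF expo.eadd[OF eadd.IH]]) (simp add: distrib_right gsum_add)
next
  case (eatom a b d r1 r2 c)
  define w1 where "w1 = qvar ^ Suc a * cconst r1"
  define w2 where "w2 = qvar ^ Suc b * cconst r2"
  have r: "r1 \<noteq> 0" "r2 \<noteq> 0" using eatom root_nz by auto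
  have w1: "w1 \<noteq> 0" "w1 \<noteq> 1" unfolding w1_def by (rule w_nz[OF r(1)], rule w_ne1, simp)
  have w2: "w2 \<noteq> 0" "w2 \<noteq> 1" unfolding w2_def by (rule w_nz[OF r(2)], rule w_ne1, simp)
  have ww: "qvar ^ (Suc a + Suc b) * cconst (r1 * r2) = w1 * w2"
    unfolding w1_def w2_def by (simp add: power_add cconst_mult mult_ac)
  have sumd: "c * (qvar ^ a * cconst r1) powi x' * (qvar ^ b * cconst r2) powi y' * qvar powi (x' + y')
      = c * w1 powi x' * w2 powi y'" for x' y'
    unfolding w1_def w2_def using qvar_nz
    by (simp add: power_int_mult_distrib power_int_add mult_ac)
  define K where "K = c / ((w1 - 1) * (w2 - 1))"
  have main: "gsum (\<lambda>x'. gsum (\<lambda>y'. c * (qvar ^ a * cconst r1) powi x' * (qvar ^ b * cconst r2) powi y'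
        * qvar powi (x' + y')) x y) (x + 1) (y + 1)
      = (K * w1 ^ 2 * w2) * (w1 * w2) powi y + (- (K * w1 ^ 2)) * w2 powi x * w1 powi y
        + (- (K * w1 * w2)) * w1 powi x * w2 powi y + (K * w1) * (w1 * w2) powi x" for x y
  proof -
    define G2 where "G2 = gsum (\<lambda>y'. w2 powi y') x y"
    have "gsum (\<lambda>x'. gsum (\<lambda>y'. c * (qvar ^ a * cconst r1) powi x' * (qvar ^ b * cconst r2) powi y'
        * qvar powi (x' + y')) x y) (x + 1) (y + 1)
      = gsum (\<lambda>x'. (c * w1 powi x') * G2) (x + 1) (y + 1)"
      unfolding sumd gsum_cmult G2_def by simp
    also have "\<dots> = gsum (\<lambda>x'. (c * G2) * w1 powi x') (x + 1) (y + 1)"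
      by (simp add: mult_ac)
    also have "\<dots> = c * G2 * ((w1 powi (y + 1 + 1) - w1 powi (x + 1)) / (w1 - 1))"
      unfolding gsum_cmult gsum_geom[OF w1] ..
    also have "\<dots> = c * ((w1 powi (y + 1 + 1) - w1 powi (x + 1)) / (w1 - 1)) * ((w2 powi (y + 1) - w2 powi x) / (w2 - 1))"
      unfolding G2_def gsum_geom[OF w2] by (simp add: mult_ac)
    also have "\<dots> = K * ((w1 powi (y + 1 + 1) - w1 powi (x + 1)) * (w2 powi (y + 1) - w2 powi x))"
      unfolding fld2 K_def ..
    also have "\<dots> = (K * w1 ^ 2 * w2) * (w1 * w2) powi y + (- (K * w1 ^ 2)) * w2 powi x * w1 powi y
        + (- (K * w1 * w2)) * w1 powi x * w2 powi y + (K * w1) * (w1 * w2) powi x"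
    proof -
      have e: "w1 powi (y + 1 + 1) = w1 * (w1 * w1 powi y)" "w1 powi (x + 1) = w1 * w1 powi x"
        "w2 powi (y + 1) = w2 * w2 powi y"
        using power_int_add_1'[of w1 "y + 1"] power_int_add_1'[of w1 y] power_int_add_1'[of w1 x]
          power_int_add_1'[of w2 y] w1 w2 by auto
      show ?thesis unfolding e by (simp add: power_int_mult_distrib power2_eq_square algebra_simps)
    qed
    finally show ?thesis .
  qed
  have deg: "0 + (Suc a + Suc b) \<le> Suc (Suc d)" "Suc b + Suc a \<le> Suc (Suc d)"
    "Suc a + Suc b \<le> Suc (Suc d)" "(Suc a + Suc b) + 0 \<le> Suc (Suc d)" using eatom by auto
  have ru: "root_of_unity (r1 * r2)" using eatom root_mult by auto
  have "expo (Suc (Suc d)) (\<lambda>x y. (K * w1 ^ 2 * w2) * (w1 * w2) powi y + (- (K * w1 ^ 2)) * w2 powi x * w1 powi y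
        + (- (K * w1 * w2)) * w1 powi x * w2 powi y + (K * w1) * (w1 * w2) powi x)"
  proof (intro expo.eadd)
    show "expo (Suc (Suc d)) (\<lambda>x y. (K * w1 ^ 2 * w2) * (w1 * w2) powi y)"
      by (rule expo_atom'[where c = "K * w1 ^ 2 * w2", OF deg(1) root_1 ru], simp only: ww) (simp add: cconst_1)
    show "expo (Suc (Suc d)) (\<lambda>x y. (- (K * w1 ^ 2)) * w2 powi x * w1 powi y)"
      by (rule expo_atom'[where c = "- (K * w1 ^ 2)", OF deg(2) eatom(3) eatom(2)]) (simp add: w1_def w2_def)
    show "expo (Suc (Suc d)) (\<lambda>x y. (- (K * w1 * w2)) * w1 powi x * w2 powi y)"
      by (rule expo_atom'[where c = "- (K * w1 * w2)", OF deg(3) eatom(2) eatom(3)]) (simp add: w1_def w2_def)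
    show "expo (Suc (Suc d)) (\<lambda>x y. (K * w1) * (w1 * w2) powi x)"
      by (rule expo_atom'[where c = "K * w1", OF deg(4) ru root_1], simp only: ww) (simp add: cconst_1)
  qed
  then show ?case by (rule expo_eq) (rule main)
qed

lemma expo_D: "expo d B \<Longrightarrow> expo (2 * r + d) (D r B)"
proof (induction r)
  case 0 then show ?case by simp
next
  case (Suc r)
  have "expo (Suc (Suc (2 * r + d))) (D (Suc r) B)"
    using expo_step[OF Suc.IH[OF Suc.prems]] by simp
  then show ?case by simp
qed

theorem lemma14:
  fixes r d :: nat and B :: "int \<Rightarrow> int \<Rightarrow> qrat"
  assumes "qquasi_poly d B"
  shows "qquasi_poly (2 * r + d) (D r B)"
  using qq_qquasi[OF expo_qq[OF expo_D[OF qquasi_expo[OF assms]]]] .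

end
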